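(* There exists a countable collection $\mathcal{L}$ of languages (over $\mathcal{X}=\mathbb{N}^2$) with closure dimension $0$ such that for every $\varepsilon>0$ and every $n\in\mathbb{N}$, there is no $\varepsilon$-DP randomized map $A:\mathcal{X}^n\to\mathcal{X}$ satisfying $\Pr[A(x_1,\dots,x_n)\in K\setminus\{x_1,\dots,x_n\}]\ge 2/3$ for every $K\in\mathcal{L}$ and every $n$ distinct elements $x_1,\dots,x_n\in K$ (equivalently, every length-$n$ prefix of an enumeration of $K$ without repetitions).
   Context: A language is an infinite subset of $\mathcal{X}$. For a collection $\mathcal{L}'$, $\mathrm{Cl}(\mathcal{L}')=\bigcap_{L\in\mathcal{L}'}L$; the closure dimension of $\mathcal{L}$ is the smallest $d\in\{-1\}\cup\mathbb{N}$ such that every subcollection $\mathcal{L}'\subseteq\mathcal{L}$ has $|\mathrm{Cl}(\mathcal{L}')|=\infty$ or $|\mathrm{Cl}(\mathcal{L}')|\le d$. A randomized map $A:\mathcal{X}^n\to\mathcal{X}$ is $\varepsilon$-DP if for all $X,X'\in\mathcal{X}^n$ differing in exactly one coordinate and all events $E$, $\Pr[A(X)\in E]\le e^\varepsilon\Pr[A(X')\in E]$. *)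

theory Defs
  imports "HOL-Probability.Probability"
begin

type_synonym point = "nat \<times> nat"

definition is_language :: "'a set \<Rightarrow> bool" where
  "is_language K \<longleftrightarrow> infinite K"

text \<open>Cl(L') is the intersection of all members of L' (the empty intersection is UNIV).\<close>
definition Cl :: "'a set set \<Rightarrow> 'a set" where
  "Cl L' = \<Inter> L'"

definition closure_bound :: "'a set set \<Rightarrow> int \<Rightarrow> bool" where
  "closure_bound L d \<longleftrightarrow>
     (\<forall>L' \<subseteq> L. infinite (Cl L') \<or> int (card (Cl L')) \<le> d)"

definition closure_dimension :: "'a set set \<Rightarrow> int" where
  "closure_dimension L = (LEAST d. d \<ge> -1 \<and> closure_bound L d)"

definition neighbours :: "nat \<Rightarrow> 'a list \<Rightarrow> 'a list \<Rightarrow> bool" where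
  "neighbours n xs ys \<longleftrightarrow> length xs = n \<and> length ys = n \<and>
     card {i. i < n \<and> xs ! i \<noteq> ys ! i} = 1"

text \<open>A randomized map X^n -> X (X countable, so output distributions are pmfs),
  inputs of length n represented as lists; epsilon-differential privacy.\<close>
definition eps_DP :: "real \<Rightarrow> nat \<Rightarrow> ('a list \<Rightarrow> 'a pmf) \<Rightarrow> bool" where
  "eps_DP \<epsilon> n A \<longleftrightarrow>
     (\<forall>xs ys E. neighbours n xs ys \<longrightarrow>
        measure_pmf.prob (A xs) E \<le> exp \<epsilon> * measure_pmf.prob (A ys) E)"

end

theory Submission
  imports Defs
begin

lemma group_priv:
  fixes A :: "'a list \<Rightarrow> 'a pmf"
  assumes dp: "eps_DP \<epsilon> n A" and ep: "\<epsilon> \<ge> 0" and lx: "length xs = n" and ly: "length ys = n"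
  shows "measure_pmf.prob (A xs) E \<le> exp \<epsilon> ^ n * measure_pmf.prob (A ys) E"
proof -
  define z where "z k = map (\<lambda>i. if i < k then ys!i else xs!i) [0..<n]" for k
  have z0: "z 0 = xs" unfolding z_def using lx by (simp add: list_eq_iff_nth_eq)
  have zn: "z n = ys" unfolding z_def using ly by (simp add: list_eq_iff_nth_eq)
  have step: "measure_pmf.prob (A (z k)) E \<le> exp \<epsilon> * measure_pmf.prob (A (z (Suc k))) E"
    if k: "k < n" for k
  proof (cases "xs!k = ys!k")
    case True
    have "z k = z (Suc k)" unfolding z_def using True by (auto intro!: map_cong simp: less_Suc_eq)
    moreover have "1 \<le> exp \<epsilon>" using ep by simp
    ultimately have "1 * measure_pmf.prob (A (z (Suc k))) E \<le> exp \<epsilon> * measure_pmf.prob (A (z (Suc k))) E"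
      by (intro mult_right_mono) auto
    thus ?thesis using \<open>z k = z (Suc k)\<close> by simp
  next
    case False
    have "{i. i < n \<and> z k ! i \<noteq> z (Suc k) ! i} = {k}"
      unfolding z_def using k False by (auto split: if_splits)
    hence "neighbours n (z k) (z (Suc k))" unfolding neighbours_def z_def by simp
    thus ?thesis using dp unfolding eps_DP_def by blast
  qed
  have "k \<le> n \<Longrightarrow> measure_pmf.prob (A xs) E \<le> exp \<epsilon> ^ k * measure_pmf.prob (A (z k)) E" for k
  proof (induction k)
    case 0 then show ?case using z0 by simp
  next
    case (Suc k)
    hence "measure_pmf.prob (A xs) E \<le> exp \<epsilon> ^ k * measure_pmf.prob (A (z k)) E" by simp
    also have "\<dots> \<le> exp \<epsilon> ^ k * (exp \<epsilon> * measure_pmf.prob (A (z (Suc k))) E)"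
      using step[of k] Suc.prems by (intro mult_left_mono) auto
    finally show ?case by (simp add: mult_ac)
  qed
  from this[of n] show ?thesis using zn by simp
qed

definition row :: "nat \<Rightarrow> point set" where "row j = {j} \<times> UNIV"

lemma row_inf: "infinite (row j)"
proof
  assume "finite (row j)"
  hence "finite (snd ` row j)" by simp
  moreover have "snd ` row j = UNIV" unfolding row_def by auto
  ultimately show False by simp
qed

lemma row_disj: "i \<noteq> j \<Longrightarrow> row i \<inter> row j = {}" unfolding row_def by auto

theorem corollaryD1:
  shows "\<exists>\<L> :: point set set.
     countable \<L> \<and> (\<forall>K \<in> \<L>. is_language K) \<and> closure_dimension \<L> = 0 \<and>
     (\<forall>\<epsilon> > 0. \<forall>n :: nat. \<not> (\<exists>A :: point list \<Rightarrow> point pmf.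
        eps_DP \<epsilon> n A \<and>
        (\<forall>K \<in> \<L>. \<forall>xs. length xs = n \<and> distinct xs \<and> set xs \<subseteq> K \<longrightarrow>
            measure_pmf.prob (A xs) (K - set xs) \<ge> 2/3)))"
proof (intro exI conjI allI impI)
  let ?L = "range row"
  show "countable ?L" by simp
  show "\<forall>K \<in> ?L. is_language K" using row_inf by (auto simp: is_language_def)
  have cb0: "closure_bound ?L 0"
    unfolding closure_bound_def
  proof (intro allI impI)
    fix L' assume L': "L' \<subseteq> ?L"
    show "infinite (Cl L') \<or> int (card (Cl L')) \<le> 0"
    proof (cases "\<exists>i j. i \<noteq> j \<and> row i \<in> L' \<and> row j \<in> L'")
      case True
      then obtain i j where "i \<noteq> j" "row i \<in> L'" "row j \<in> L'" by blast
      hence "Cl L' = {}" unfolding Cl_def using row_disj[of i j] by blast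
      thus ?thesis by simp
    next
      case False
      have "Cl L' = UNIV \<or> (\<exists>i. Cl L' = row i)"
      proof (cases "L' = {}")
        case True thus ?thesis by (simp add: Cl_def)
      next
        case F: False
        then obtain i where i: "row i \<in> L'" using L' by blast
        have "K = row i" if KL: "K \<in> L'" for K
        proof -
          obtain j where "K = row j" using L' KL by blast
          moreover have "\<not> (j \<noteq> i \<and> row j \<in> L' \<and> row i \<in> L')" using False by blast
          ultimately show ?thesis using i KL by auto
        qed
        hence "L' = {row i}" using i by blast
        thus ?thesis by (auto simp: Cl_def)
      qed
      moreover have "infinite (UNIV :: point set)" by (simp add: finite_prod)
      ultimately show ?thesis using row_inf by auto
    qed
  qed
  have ncb: "\<not> closure_bound ?L d" if "d < 0" for d
  proof
    assume "closure_bound ?L d"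
    hence "infinite (Cl {row 0, row 1}) \<or> int (card (Cl {row 0, row 1})) \<le> d"
      unfolding closure_bound_def by auto
    moreover have "Cl {row 0, row 1} = {}" unfolding Cl_def using row_disj[of 0 1] by simp
    ultimately show False using that by simp
  qed
  show "closure_dimension ?L = 0"
    unfolding closure_dimension_def
  proof (rule Least_equality)
    show "-1 \<le> (0::int) \<and> closure_bound ?L 0" using cb0 by simp
    fix y :: int assume "-1 \<le> y \<and> closure_bound ?L y"
    thus "0 \<le> y" using ncb by force
  qed
next
  fix \<epsilon> :: real and n :: nat
  assume ep: "\<epsilon> > 0"
  show "\<not> (\<exists>A :: point list \<Rightarrow> point pmf.
        eps_DP \<epsilon> n A \<and>
        (\<forall>K \<in> range row. \<forall>xs. length xs = n \<and> distinct xs \<and> set xs \<subseteq> K \<longrightarrow>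
            measure_pmf.prob (A xs) (K - set xs) \<ge> 2/3))"
  proof
    assume "\<exists>A :: point list \<Rightarrow> point pmf.
        eps_DP \<epsilon> n A \<and>
        (\<forall>K \<in> range row. \<forall>xs. length xs = n \<and> distinct xs \<and> set xs \<subseteq> K \<longrightarrow>
            measure_pmf.prob (A xs) (K - set xs) \<ge> 2/3)"
    then obtain A :: "point list \<Rightarrow> point pmf" where dp: "eps_DP \<epsilon> n A" and
      acc: "\<And>K xs. K \<in> range row \<Longrightarrow> length xs = n \<Longrightarrow> distinct xs \<Longrightarrow> set xs \<subseteq> K \<Longrightarrow>
            measure_pmf.prob (A xs) (K - set xs) \<ge> 2/3" by blast
    define D where "D j = map (\<lambda>k. (j, k)) [0..<n]" for j :: nat
    define c where "c = exp \<epsilon> ^ n"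
    have cpos: "c > 0" unfolding c_def by simp
    have lD: "length (D j) = n" for j unfolding D_def by simp
    have dD: "distinct (D j)" for j unfolding D_def by (simp add: distinct_map inj_on_def)
    have sD: "set (D j) \<subseteq> row j" for j unfolding D_def row_def by auto
    have bnd: "2/3 / c \<le> measure_pmf.prob (A (D 0)) (row j - set (D j))" for j
    proof -
      have "2/3 \<le> measure_pmf.prob (A (D j)) (row j - set (D j))"
        using acc[of "row j" "D j"] lD dD sD by auto
      also have "measure_pmf.prob (A (D 0)) (row j - set (D j)) \<ge>
          measure_pmf.prob (A (D j)) (row j - set (D j)) / c"
        using group_priv[OF dp _ lD[of j] lD[of 0], where E="row j - set (D j)"] ep cpos
        unfolding c_def by (simp add: field_simps)
      ultimately show ?thesis using cpos divide_right_mono[of "2/3" _ c] order_trans by (metis less_imp_le)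
    qed
    obtain m :: nat where m: "real m > 3/2 * c" using reals_Archimedean2 by blast
    let ?S = "\<lambda>j. row j - set (D j)"
    have "measure_pmf.prob (A (D 0)) (\<Union>j\<in>{..<m}. ?S j) = (\<Sum>j<m. measure_pmf.prob (A (D 0)) (?S j))"
      by (rule measure_pmf.finite_measure_finite_Union) (auto simp: disjoint_family_on_def row_def)
    also have "\<dots> \<ge> (\<Sum>j<m. 2/3 / c)" by (rule sum_mono) (rule bnd)
    finally have "real m * (2/3 / c) \<le> measure_pmf.prob (A (D 0)) (\<Union>j\<in>{..<m}. ?S j)" by simp
    hence "real m * (2/3 / c) \<le> 1" using measure_pmf.prob_le_1 order_trans by blast
    thus False using m cpos by (simp add: field_simps)
  qed
qed

end
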